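(* For each integer $n\ge0$ let $\theta^\Delta_n(x)=\sum_{k=0}^n\frac{(n+k)!}{2^k(n-k)!\,k!}(x)_{n-k}$, where $(x)_j=x(x-1)\cdots(x-j+1)$ and $(x)_0=1$. Then for every $n\ge1$ and every $x\in\mathbb{C}$, \[ \theta^\Delta_n(x+1)-2\theta^\Delta_n(x)+x\,\theta^\Delta_{n-1}(x-1)=0, \] \[ \theta^\Delta_{n+1}(x)+(x-2n-1)\theta^\Delta_n(x)-2x\,\theta^\Delta_n(x-1)=0 . \] *)

theory Defs
  imports Complex_Main
begin

definition falling_fact :: "complex \<Rightarrow> nat \<Rightarrow> complex" where
  "falling_fact x j = (\<Prod>i<j. x - of_nat i)"

definition thetaD :: "nat \<Rightarrow> complex \<Rightarrow> complex" where
  "thetaD n x = (\<Sum>k=0..n. of_nat (fact (n + k)) / (2 ^ k * of_nat (fact (n - k)) * of_nat (fact k))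
                   * falling_fact x (n - k))"

end

theory Submission
  imports Defs
begin

definition A :: "nat \<Rightarrow> nat \<Rightarrow> complex" where
  "A n j = (if j \<le> n then fact (2*n-j) / (2^(n-j) * fact j * fact (n-j)) else 0)"

lemma ff_Suc: "falling_fact x (Suc j) = falling_fact x j * (x - of_nat j)"
  by (simp add: falling_fact_def)

lemma ff_plus1: "falling_fact (x+1) j = falling_fact x j + of_nat j * falling_fact x (j-1)"
proof (induction j)
  case 0 then show ?case by (simp add: falling_fact_def)
next
  case (Suc j)
  show ?case
  proof (cases j)
    case 0 then show ?thesis by (simp add: falling_fact_def)
  next
    case (Suc i)
    have "falling_fact x j = falling_fact x i * (x - of_nat i)" using Suc ff_Suc by simp
    then show ?thesis using Suc.IH \<open>j = Suc i\<close> by (simp add: ff_Suc algebra_simps)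
  qed
qed

lemma ff_shift: "x * falling_fact (x-1) j = falling_fact x (Suc j)"
  unfolding falling_fact_def prod.lessThan_Suc_shift by (simp add: algebra_simps)

lemma ff_mulx: "x * falling_fact x j = falling_fact x (Suc j) + of_nat j * falling_fact x j"
  by (simp add: ff_Suc algebra_simps)

lemma theta_alt: "thetaD n x = (\<Sum>j\<le>n. A n j * falling_fact x j)"
proof -
  have "thetaD n x = (\<Sum>k\<le>n. A n (n-k) * falling_fact x (n-k))"
    unfolding thetaD_def atLeast0AtMost
  proof (rule sum.cong)
    fix k assume "k \<in> {..n}"
    then have k: "k \<le> n" by simp
    have e: "2*n - (n-k) = n + k" "n - (n-k) = k" using k by auto
    show "of_nat (fact (n + k)) / (2 ^ k * of_nat (fact (n - k)) * of_nat (fact k)) * falling_fact x (n - k) = A n (n-k) * falling_fact x (n-k)"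
      unfolding A_def e by (simp add: of_nat_fact mult_ac)
  qed simp
  also have "\<dots> = (\<Sum>j\<le>n. A n j * falling_fact x j)"
    by (rule sum.reindex_bij_witness[where i="\<lambda>j. n-j" and j="\<lambda>j. n-j"]) auto
  finally show ?thesis .
qed

lemma theta_ext: "n < N \<Longrightarrow> thetaD n x = (\<Sum>j<N. A n j * falling_fact x j)"
  unfolding theta_alt
  by (rule sum.mono_neutral_left) (auto simp: A_def)

lemma one_plus_nz[simp]: "(1::complex) + of_nat m \<noteq> 0"
  by (metis of_nat_Suc nat.distinct(1) of_nat_eq_0_iff)

lemma A_diag: "A n n = 1" by (simp add: A_def)
lemma A_big: "n < j \<Longrightarrow> A n j = 0" by (simp add: A_def)

lemma coef1: "A (Suc m) j = of_nat (Suc j) * A (Suc m) (Suc j) + (if j = 0 then 0 else A m (j - 1))"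
proof -
  consider "Suc m < j" | "j = Suc m" | "j = 0" | i d where "j = Suc i" "m = Suc (i + d)"
  proof (cases j)
    case (Suc i)
    assume h1: "Suc m < j \<Longrightarrow> thesis" and h2: "j = Suc m \<Longrightarrow> thesis"
      and h4: "\<And>i d. j = Suc i \<Longrightarrow> m = Suc (i + d) \<Longrightarrow> thesis"
    show thesis
    proof (cases "Suc m \<le> j")
      case True then show thesis using h1 h2 by linarith
    next
      case False
      then have "m = Suc (i + (m - i - 1))" using Suc by simp
      then show thesis using h4 Suc by blast
    qed
  qed
  then show ?thesis
  proof cases
    case 1 then show ?thesis by (simp add: A_def)
  next
    case 2 then show ?thesis by (simp add: A_def)
  next
    case 3
    have e: "2 * Suc m = Suc (Suc (2*m))" "2 * Suc m - Suc 0 = Suc (2*m)" by auto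
    show ?thesis using 3 unfolding A_def e by (simp del: of_nat_Suc add: fact_Suc field_simps) (simp add: algebra_simps)
  next
    case 4
    have e: "2 * Suc m - j = Suc (Suc (Suc (i + 2*d)))" "Suc m - j = Suc d"
      "2 * Suc m - Suc j = Suc (Suc (i + 2*d))" "Suc m - Suc j = d"
      "2 * m - (j - 1) = Suc (Suc (i + 2*d))" "m - (j - 1) = Suc d"
      using 4 by auto
    have le: "j \<le> Suc m" "Suc j \<le> Suc m" "j - 1 \<le> m" using 4 by auto
    show ?thesis using 4 unfolding A_def e if_P[OF le(1)] if_P[OF le(2)] if_P[OF le(3)]
      by (simp del: of_nat_Suc add: fact_Suc field_simps) (simp add: algebra_simps)
  qed
qed

lemma coef2: "A (Suc n) j = (if j = 0 then 0 else A n (j - 1)) + (2 * of_nat n + 1 - of_nat j) * A n j"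
proof -
  consider "Suc n < j" | "j = Suc n" | "j = 0" | i d where "j = Suc i" "n = Suc (i + d)"
  proof (cases j)
    case (Suc i)
    assume h1: "Suc n < j \<Longrightarrow> thesis" and h2: "j = Suc n \<Longrightarrow> thesis"
      and h4: "\<And>i d. j = Suc i \<Longrightarrow> n = Suc (i + d) \<Longrightarrow> thesis"
    show thesis
    proof (cases "Suc n \<le> j")
      case True then show thesis using h1 h2 by linarith
    next
      case False
      then have "n = Suc (i + (n - i - 1))" using Suc by simp
      then show thesis using h4 Suc by blast
    qed
  qed
  then show ?thesis
  proof cases
    case 1 then show ?thesis by (simp add: A_def)
  next
    case 2 then show ?thesis by (simp add: A_def)
  next
    case 3
    have e: "2 * Suc n = Suc (Suc (2*n))" by auto
    show ?thesis using 3 unfolding A_def e by (simp del: of_nat_Suc add: fact_Suc field_simps) (simp add: algebra_simps)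
  next
    case 4
    have e: "2 * Suc n - j = Suc (Suc (Suc (i + 2*d)))" "Suc n - j = Suc d"
      "2 * n - j = Suc (i + 2*d)" "n - j = d"
      "2 * n - (j - 1) = Suc (Suc (i + 2*d))" "n - (j - 1) = Suc d"
      using 4 by auto
    have le: "j \<le> Suc n" "j \<le> n" "j - 1 \<le> n" using 4 by auto
    show ?thesis using 4 unfolding A_def e if_P[OF le(1)] if_P[OF le(2)] if_P[OF le(3)]
      by (simp del: of_nat_Suc add: fact_Suc field_simps) (simp add: algebra_simps)
  qed
qed

lemma shift_down: "(\<Sum>j<Suc (Suc n). A n j * of_nat j * falling_fact x (j-1))
   = (\<Sum>j<Suc (Suc n). of_nat (Suc j) * A n (Suc j) * falling_fact x j)"
  unfolding sum.lessThan_Suc_shift[of "\<lambda>j. A n j * of_nat j * falling_fact x (j-1)"]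
  by (simp add: A_big mult_ac)

lemma shift_up: "(\<Sum>j<Suc n. A m j * falling_fact x (Suc j))
   = (\<Sum>j<Suc (Suc n). (if j = 0 then 0 else A m (j-1)) * falling_fact x j)"
  unfolding sum.lessThan_Suc_shift[of "\<lambda>j. (if j = 0 then 0 else A m (j-1)) * falling_fact x j"]
  by simp

lemma part1:
  fixes x :: complex
  shows "thetaD (Suc m) (x + 1) - 2 * thetaD (Suc m) x + x * thetaD m (x - 1) = 0"
proof -
  let ?n = "Suc m"
  let ?N = "Suc (Suc ?n)"
  let ?c = "\<lambda>j. (if j = 0 then 0 else A m (j-1))"
  have h1: "thetaD ?n (x+1) = (\<Sum>j<?N. A ?n j * falling_fact x j) + (\<Sum>j<?N. A ?n j * of_nat j * falling_fact x (j-1))"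
  proof -
    have "thetaD ?n (x+1) = (\<Sum>j<?N. A ?n j * falling_fact (x+1) j)" by (rule theta_ext) simp
    also have "\<dots> = (\<Sum>j<?N. A ?n j * falling_fact x j) + (\<Sum>j<?N. A ?n j * of_nat j * falling_fact x (j-1))"
      by (simp only: ff_plus1 distrib_left sum.distrib mult.assoc)
    finally show ?thesis .
  qed
  have h3: "x * thetaD m (x-1) = (\<Sum>j<?N. ?c j * falling_fact x j)"
  proof -
    have "thetaD m (x-1) = (\<Sum>j<Suc ?n. A m j * falling_fact (x-1) j)" by (rule theta_ext) simp
    then have "x * thetaD m (x-1) = (\<Sum>j<Suc ?n. A m j * falling_fact x (Suc j))"
    proof -
      have p: "\<And>j. x * (A m j * falling_fact (x-1) j) = A m j * falling_fact x (Suc j)"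
        by (metis ff_shift mult.left_commute)
      show ?thesis unfolding \<open>thetaD m (x-1) = _\<close> sum_distrib_left p by (rule refl)
    qed
    also have "\<dots> = (\<Sum>j<?N. ?c j * falling_fact x j)" by (rule shift_up)
    finally show ?thesis .
  qed
  have h4: "thetaD ?n x = (\<Sum>j<?N. A ?n j * falling_fact x j)"
    by (simp add: theta_ext[of ?n ?N])
  have "thetaD ?n (x + 1) - 2 * thetaD ?n x + x * thetaD m (x - 1)
     = (\<Sum>j<?N. (A ?n j + of_nat (Suc j) * A ?n (Suc j) - 2 * A ?n j + ?c j) * falling_fact x j)"
    unfolding h1 h3 h4 shift_down
    by (simp del: sum.lessThan_Suc add: sum.distrib sum_subtractf sum_distrib_left algebra_simps)
  also have "\<dots> = 0"
  proof (rule sum.neutral, rule ballI)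
    fix j
    have e: "A ?n j + of_nat (Suc j) * A ?n (Suc j) - 2 * A ?n j + ?c j = 0"
      using coef1[of m j] by (simp add: algebra_simps)
    show "(A ?n j + of_nat (Suc j) * A ?n (Suc j) - 2 * A ?n j + ?c j) * falling_fact x j = 0"
      unfolding e by simp
  qed
  finally show ?thesis .
qed

lemma part2:
  fixes x :: complex
  shows "thetaD (n + 1) x + (x - 2 * of_nat n - 1) * thetaD n x - 2 * x * thetaD n (x - 1) = 0"
proof -
  let ?N = "Suc (Suc n)"
  let ?c = "\<lambda>j. (if j = 0 then 0 else A n (j-1))"
  have h1: "thetaD (n+1) x = (\<Sum>j<?N. A (Suc n) j * falling_fact x j)"
    by (simp add: theta_ext[of "Suc n" ?N])
  have h2: "thetaD n x = (\<Sum>j<?N. A n j * falling_fact x j)"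
    by (simp add: theta_ext[of n ?N])
  have sh: "(\<Sum>j<?N. A n j * falling_fact x (Suc j)) = (\<Sum>j<?N. ?c j * falling_fact x j)"
  proof -
    have "(\<Sum>j<?N. A n j * falling_fact x (Suc j)) = (\<Sum>j<Suc n. A n j * falling_fact x (Suc j))"
      by (simp only: sum.lessThan_Suc[of _ "Suc n"]) (simp add: A_big)
    also have "\<dots> = (\<Sum>j<?N. ?c j * falling_fact x j)" by (rule shift_up)
    finally show ?thesis .
  qed
  have h3: "x * thetaD n x = (\<Sum>j<?N. ?c j * falling_fact x j) + (\<Sum>j<?N. of_nat j * A n j * falling_fact x j)"
  proof -
    have p: "\<And>j. x * (A n j * falling_fact x j) = A n j * falling_fact x (Suc j) + of_nat j * A n j * falling_fact x j"
      by (metis ff_mulx distrib_left mult.assoc mult.left_commute)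
    show ?thesis unfolding h2 sh[symmetric] sum_distrib_left p sum.distrib by (rule refl)
  qed
  have h4: "x * thetaD n (x-1) = (\<Sum>j<?N. ?c j * falling_fact x j)"
  proof -
    have t: "thetaD n (x-1) = (\<Sum>j<?N. A n j * falling_fact (x-1) j)" by (rule theta_ext) simp
    have p: "\<And>j. x * (A n j * falling_fact (x-1) j) = A n j * falling_fact x (Suc j)"
      by (metis ff_shift mult.left_commute)
    show ?thesis unfolding t sum_distrib_left p sh by (rule refl)
  qed
  have "thetaD (n + 1) x + (x - 2 * of_nat n - 1) * thetaD n x - 2 * x * thetaD n (x - 1)
      = thetaD (n + 1) x + x * thetaD n x - (2 * of_nat n + 1) * thetaD n x - 2 * (x * thetaD n (x - 1))"
    by (simp add: algebra_simps)
  also have "\<dots> = (\<Sum>j<?N. (A (Suc n) j - ?c j - (2 * of_nat n + 1 - of_nat j) * A n j) * falling_fact x j)"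
    unfolding h3 h4 unfolding h1 h2
    by (simp del: sum.lessThan_Suc add: sum.distrib sum_subtractf sum_distrib_left algebra_simps)
  also have "\<dots> = 0"
  proof (rule sum.neutral, rule ballI)
    fix j
    have e: "A (Suc n) j - ?c j - (2 * of_nat n + 1 - of_nat j) * A n j = 0"
      using coef2[of n j] by (simp add: algebra_simps)
    show "(A (Suc n) j - ?c j - (2 * of_nat n + 1 - of_nat j) * A n j) * falling_fact x j = 0"
      unfolding e by simp
  qed
  finally show ?thesis .
qed


theorem mainTheorem12:
  fixes n :: nat and x :: complex
  assumes "n \<ge> 1"
  shows "thetaD n (x + 1) - 2 * thetaD n x + x * thetaD (n - 1) (x - 1) = 0 \<and>
         thetaD (n + 1) x + (x - 2 * of_nat n - 1) * thetaD n x - 2 * x * thetaD n (x - 1) = 0"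
proof
  obtain m where m: "n = Suc m" using assms by (cases n) auto
  show "thetaD n (x + 1) - 2 * thetaD n x + x * thetaD (n - 1) (x - 1) = 0"
    using part1[of m x] m by simp
  show "thetaD (n + 1) x + (x - 2 * of_nat n - 1) * thetaD n x - 2 * x * thetaD n (x - 1) = 0"
    by (rule part2)
qed

end
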